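(* For integers $0\le l\le m$ define $B_{l,m}:=\dfrac{A_{l,m}}{2^{l}(m+1-l)_{2l}}$. Then $B_{m,m}=1$, $B_{m-1,m}=2m+1$ (for $m\ge1$), $$B_{l-1,m}=(2m+1)B_{l,m}-(m-l)(m+l+1)B_{l+1,m}\qquad(1\le l\le m-1),$$ and every $B_{l,m}$ ($0\le l\le m$) is an odd integer.
   Context: $A_{l,m}=\frac{l!\,m!}{2^{m-l}}\sum_{k=l}^{m}2^{k}\binom{2m-2k}{m-k}\binom{m+k}{k}\binom{k}{l}$ (equivalently $l!m!2^{m+l}d_{l,m}$ with $d_{l,m}=2^{-2m}\sum_{k=l}^{m}2^{k}\binom{2m-2k}{m-k}\binom{m+k}{m}\binom{k}{l}$). $(x)_k=x(x+1)\cdots(x+k-1)$ for $k\ge1$, $(x)_0=1$. *)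

theory Defs
  imports Complex_Main
begin

definition A :: "nat \<Rightarrow> nat \<Rightarrow> real" where
  "A l m = fact l * fact m / 2 ^ (m - l) *
     (\<Sum>k = l..m. 2 ^ k * real ((2*m - 2*k) choose (m - k)) * real ((m + k) choose k) * real (k choose l))"

definition B :: "nat \<Rightarrow> nat \<Rightarrow> real" where
  "B l m = A l m / (2 ^ l * pochhammer (real m + 1 - real l) (2 * l))"

end

theory Submission imports Defs begin

lemma poch_fact: "pochhammer (real n + 1) k * fact n = (fact (n + k) :: real)"
proof (induction k)
  case 0 then show ?case by simp
next
  case (Suc k)
  have "pochhammer (real n + 1) (Suc k) * fact n = pochhammer (real n + 1) k * fact n * (real n + 1 + real k)"
    by (simp add: pochhammer_Suc)
  also have "\<dots> = fact (n+k) * real (Suc (n+k))" using Suc by simp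
  also have "\<dots> = fact (n + Suc k)" by (simp add: fact_Suc algebra_simps)
  finally show ?case .
qed

definition a :: "nat \<Rightarrow> nat \<Rightarrow> real" where
  "a m k = 2 ^ k * real ((2*m - 2*k) choose (m - k)) * real ((m + k) choose k)"

lemma a_rec:
  assumes "k < m"
  shows "real (k+1) * (2 * real m - 2 * real k - 1) * a m (k+1) = (real m - real k) * (real m + real k + 1) * a m k"
proof -
  obtain r where m: "m = k + 1 + r" using assms by (metis add.commute less_imp_Suc_add add_Suc_right Suc_eq_plus1 add.assoc)
  have e1: "2*m - 2*k = 2*r + 2" "m - k = r + 1" "2*m - 2*(k+1) = 2*r" "m - (k+1) = r" "m + (k+1) = Suc (m+k)"
    using m by auto
  have b1: "real (Suc (m+k) choose Suc k) * real (Suc k) = real (Suc (m+k)) * real ((m+k) choose k)"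
    by (metis Suc_times_binomial_eq mult.commute of_nat_mult)
  have b2: "real ((2*r+2) choose (r+1)) * real (r+1) = 2 * (2*real r+1) * real ((2*r) choose r)"
  proof -
    have "(Suc (Suc (2*r)) choose Suc r) * Suc r = Suc (Suc (2*r)) * (Suc (2*r) choose r)"
      by (metis Suc_times_binomial_eq mult.commute)
    moreover have "(Suc (2*r) choose r) = (Suc (2*r) choose Suc r)"
      by (metis binomial_symmetric add_Suc_right diff_add_inverse2 le_add2 mult_2 plus_1_eq_Suc add_Suc add.commute)
    moreover have "(Suc (2*r) choose Suc r) * Suc r = Suc (2*r) * (2*r choose r)"
      by (metis Suc_times_binomial_eq mult.commute)
    ultimately have "(Suc (Suc (2*r)) choose Suc r) * Suc r * Suc r = Suc (Suc (2*r)) * Suc (2*r) * (2*r choose r)"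
      by (metis mult.assoc)
    hence "(Suc (Suc (2*r)) choose Suc r) * Suc r * Suc r = (2 * (2*r+1) * (2*r choose r)) * Suc r"
      by (simp add: algebra_simps)
    hence "(Suc (Suc (2*r)) choose Suc r) * Suc r = 2 * (2*r+1) * (2*r choose r)"
      using mult_right_cancel[of "Suc r"] by blast
    hence "real ((Suc (Suc (2*r)) choose Suc r) * Suc r) = real (2 * (2*r+1) * (2*r choose r))"
      by (simp only:)
    thus ?thesis by (simp add: algebra_simps)
  qed
  have r1: "real m - real k = real r + 1" "2 * real m - 2 * real k - 1 = 2 * real r + 1" using m by simp_all
  define X where "X = real ((2*r) choose r)"
  define Y where "Y = real ((m+k) choose k)"
  define C where "C = real (Suc (m+k) choose Suc k)"
  define D where "D = real ((2*r+2) choose (r+1))"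
  have "real (k+1) * (2 * real m - 2 * real k - 1) * a m (k+1)
        = (2 * real r + 1) * 2 * 2^k * X * (C * real (Suc k))"
    unfolding a_def e1 r1 X_def C_def by (simp add: algebra_simps)
  also have "\<dots> = (2 * real r + 1) * 2 * 2^k * X * (real (Suc (m+k)) * Y)"
    using b1 unfolding C_def Y_def by simp
  also have "\<dots> = 2^k * (D * real (r+1)) * (real (Suc (m+k))) * Y"
    using b2 unfolding D_def X_def by (simp add: algebra_simps)
  also have "\<dots> = (real m - real k) * (real m + real k + 1) * a m k"
    unfolding a_def e1 r1 D_def Y_def by (simp add: algebra_simps)
  finally show ?thesis .
qed

definition S :: "nat \<Rightarrow> nat \<Rightarrow> real" where
  "S m j = (\<Sum>k\<le>m. a m k * real (k choose j))"

lemma L1: "real k * real ((k - 1) choose j) = real (j+1) * real (k choose (j+1))"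
proof (cases k)
  case 0 then show ?thesis by simp
next
  case (Suc n)
  have "Suc n * (n choose j) = (Suc n choose Suc j) * Suc j" by (rule Suc_times_binomial_eq)
  hence "real (Suc n * (n choose j)) = real ((Suc n choose Suc j) * Suc j)" by (simp only:)
  then show ?thesis using Suc by (simp add: algebra_simps)
qed

lemma L2: "real k * real (k choose j) = real j * real (k choose j) + real (j+1) * real (k choose (j+1))"
proof (cases "j \<le> k")
  case True
  have "(k - j) * (k choose j) = k * ((k - 1) choose j)" by (rule binomial_absorb_comp)
  hence "real (k - j) * real (k choose j) = real k * real ((k - 1) choose j)"
    by (metis of_nat_mult)
  hence "real (k - j) * real (k choose j) = real (j+1) * real (k choose (j+1))" using L1 by simp
  moreover have "real (k - j) = real k - real j" using True by simp
  ultimately show ?thesis by (simp add: algebra_simps)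
next
  case False
  then show ?thesis by (simp add: binomial_eq_0)
qed

lemma sum_main:
  "(\<Sum>k\<le>m. real k * (2 * real m + 1 - 2 * real k) * a m k * real ((k - 1) choose j))
   = (\<Sum>k\<le>m. (real m - real k) * (real m + real k + 1) * a m k * real (k choose j))"
proof (cases m)
  case 0 then show ?thesis by simp
next
  case (Suc n)
  have "(\<Sum>k\<le>m. real k * (2 * real m + 1 - 2 * real k) * a m k * real ((k - 1) choose j))
      = (\<Sum>i\<le>n. real (Suc i) * (2 * real m + 1 - 2 * real (Suc i)) * a m (Suc i) * real (i choose j))"
    unfolding Suc by (subst sum.atMost_Suc_shift) simp
  also have "\<dots> = (\<Sum>i\<le>n. (real m - real i) * (real m + real i + 1) * a m i * real (i choose j))"
  proof (rule sum.cong[OF refl])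
    fix i assume "i \<in> {..n}"
    hence "i < m" using Suc by simp
    have eq: "2*real m + 1 - 2*real (Suc i) = 2*real m - 2*real i - 1" by simp
    have "real (Suc i) * (2 * real m + 1 - 2 * real (Suc i)) * a m (Suc i) = (real m - real i) * (real m + real i + 1) * a m i"
      using a_rec[OF \<open>i < m\<close>] unfolding eq by simp
    thus "real (Suc i) * (2 * real m + 1 - 2 * real (Suc i)) * a m (Suc i) * real (i choose j)
      = (real m - real i) * (real m + real i + 1) * a m i * real (i choose j)"
      by simp
  qed
  also have "\<dots> = (\<Sum>k\<le>m. (real m - real k) * (real m + real k + 1) * a m k * real (k choose j))"
    unfolding Suc by (subst sum.atMost_Suc) simp
  finally show ?thesis .
qed

lemma sum_lin: "(\<Sum>k\<le>m. a m k * (x * real (k choose j) + y * real (k choose (j+1)) + z * real (k choose (j+2))))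
   = x * S m j + y * S m (j+1) + z * S m (j+2)"
proof -
  have "(\<Sum>k\<le>m. a m k * (x * real (k choose j) + y * real (k choose (j+1)) + z * real (k choose (j+2))))
     = (\<Sum>k\<le>m. x * (a m k * real (k choose j)) + y * (a m k * real (k choose (j+1))) + z * (a m k * real (k choose (j+2))))"
    by (rule sum.cong) (simp_all add: algebra_simps)
  also have "\<dots> = x * S m j + y * S m (j+1) + z * S m (j+2)"
    by (simp only: sum.distrib sum_distrib_left[symmetric] S_def)
  finally show ?thesis .
qed

lemma S_rec:
  "real (j+1) * real (j+2) * S m (j+2) = (2 * real m + 1) * real (j+1) * S m (j+1)
     + (real j * real j + real j - real m * real m - real m) * S m j"
proof -
  define C0 where "C0 k = real (k choose j)" for k
  define C1 where "C1 k = real (k choose (j+1))" for k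
  define C2 where "C2 k = real (k choose (j+2))" for k
  have p1: "real k * (2 * real m + 1 - 2 * real k) * real ((k - 1) choose j)
     = 0 * C0 k + ((2 * real m + 1) * real (j+1) - 2 * real (j+1) * real (j+1)) * C1 k + (- 2 * real (j+1) * real (j+2)) * C2 k" for k
  proof -
    have h1: "real k * real ((k - 1) choose j) = real (j+1) * C1 k" using L1 unfolding C1_def by simp
    have h2: "real k * C1 k = real (j+1) * C1 k + real (j+2) * C2 k" using L2[of k "j+1"] unfolding C1_def C2_def by simp
    have "real k * (2 * real m + 1 - 2 * real k) * real ((k - 1) choose j)
        = (2 * real m + 1 - 2 * real k) * (real k * real ((k - 1) choose j))" by (simp add: algebra_simps)
    also have "\<dots> = (2 * real m + 1) * real (j+1) * C1 k - 2 * real (j+1) * (real k * C1 k)"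
      unfolding h1 by (simp add: algebra_simps)
    also have "\<dots> = 0 * C0 k + ((2 * real m + 1) * real (j+1) - 2 * real (j+1) * real (j+1)) * C1 k + (- 2 * real (j+1) * real (j+2)) * C2 k"
      unfolding h2 by (simp add: algebra_simps)
    finally show ?thesis .
  qed
  have p2: "(real m - real k) * (real m + real k + 1) * real (k choose j)
     = (real m * real m + real m - real j - real j * real j) * C0 k + (- 2 * real (j+1) * real (j+1)) * C1 k + (- real (j+1) * real (j+2)) * C2 k" for k
  proof -
    have h0: "real k * C0 k = real j * C0 k + real (j+1) * C1 k" using L2[of k j] unfolding C0_def C1_def by simp
    have h2: "real k * C1 k = real (j+1) * C1 k + real (j+2) * C2 k" using L2[of k "j+1"] unfolding C1_def C2_def by simp
    have "(real m - real k) * (real m + real k + 1) * real (k choose j)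
       = (real m * real m + real m) * C0 k - (real k * C0 k) - real k * (real k * C0 k)"
      unfolding C0_def by (simp add: algebra_simps)
    also have "\<dots> = (real m * real m + real m) * C0 k - (real j * C0 k + real (j+1) * C1 k) - real k * (real j * C0 k + real (j+1) * C1 k)"
      unfolding h0 ..
    also have "\<dots> = (real m * real m + real m) * C0 k - (real j * C0 k + real (j+1) * C1 k) - real j * (real k * C0 k) - real (j+1) * (real k * C1 k)"
      by (simp add: algebra_simps)
    also have "\<dots> = (real m * real m + real m - real j - real j * real j) * C0 k + (- 2 * real (j+1) * real (j+1)) * C1 k + (- real (j+1) * real (j+2)) * C2 k"
      unfolding h0 h2 by (simp add: algebra_simps)
    finally show ?thesis .
  qed
  have "(\<Sum>k\<le>m. a m k * (0 * C0 k + ((2 * real m + 1) * real (j+1) - 2 * real (j+1) * real (j+1)) * C1 k + (- 2 * real (j+1) * real (j+2)) * C2 k))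
      = (\<Sum>k\<le>m. a m k * ((real m * real m + real m - real j - real j * real j) * C0 k + (- 2 * real (j+1) * real (j+1)) * C1 k + (- real (j+1) * real (j+2)) * C2 k))"
  proof -
    have "(\<Sum>k\<le>m. a m k * (0 * C0 k + ((2 * real m + 1) * real (j+1) - 2 * real (j+1) * real (j+1)) * C1 k + (- 2 * real (j+1) * real (j+2)) * C2 k))
       = (\<Sum>k\<le>m. real k * (2 * real m + 1 - 2 * real k) * a m k * real ((k - 1) choose j))"
    proof (rule sum.cong[OF refl])
      fix k
      have "real k * (2 * real m + 1 - 2 * real k) * a m k * real ((k - 1) choose j)
          = a m k * (real k * (2 * real m + 1 - 2 * real k) * real ((k - 1) choose j))" by (simp only: ac_simps)
      also have "\<dots> = a m k * (0 * C0 k + ((2 * real m + 1) * real (j+1) - 2 * real (j+1) * real (j+1)) * C1 k + (- 2 * real (j+1) * real (j+2)) * C2 k)"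
        by (simp only: p1)
      finally show "a m k * (0 * C0 k + ((2 * real m + 1) * real (j+1) - 2 * real (j+1) * real (j+1)) * C1 k + (- 2 * real (j+1) * real (j+2)) * C2 k)
         = real k * (2 * real m + 1 - 2 * real k) * a m k * real ((k - 1) choose j)" by (rule sym)
    qed
    also have "\<dots> = (\<Sum>k\<le>m. (real m - real k) * (real m + real k + 1) * a m k * real (k choose j))"
      by (rule sum_main)
    also have "\<dots> = (\<Sum>k\<le>m. a m k * ((real m * real m + real m - real j - real j * real j) * C0 k + (- 2 * real (j+1) * real (j+1)) * C1 k + (- real (j+1) * real (j+2)) * C2 k))"
    proof (rule sum.cong[OF refl])
      fix k
      have "(real m - real k) * (real m + real k + 1) * a m k * real (k choose j)
          = a m k * ((real m - real k) * (real m + real k + 1) * real (k choose j))" by (simp only: ac_simps)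
      also have "\<dots> = a m k * ((real m * real m + real m - real j - real j * real j) * C0 k + (- 2 * real (j+1) * real (j+1)) * C1 k + (- real (j+1) * real (j+2)) * C2 k)"
        by (simp only: p2)
      finally show "(real m - real k) * (real m + real k + 1) * a m k * real (k choose j) = a m k * ((real m * real m + real m - real j - real j * real j) * C0 k + (- 2 * real (j+1) * real (j+1)) * C1 k + (- real (j+1) * real (j+2)) * C2 k)" .
    qed
    finally show ?thesis .
  qed
  hence "(2 * real m + 1) * real (j+1) * S m (j+1) - 2 * real (j+1) * real (j+1) * S m (j+1) - 2 * real (j+1) * real (j+2) * S m (j+2)
     = (real m * real m + real m - real j - real j * real j) * S m j - 2 * real (j+1) * real (j+1) * S m (j+1) - real (j+1) * real (j+2) * S m (j+2)"
    unfolding C0_def C1_def C2_def sum_lin by (simp add: algebra_simps)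
  thus ?thesis by (simp add: algebra_simps)
qed


lemma S_zero: "m < j \<Longrightarrow> S m j = 0"
  unfolding S_def by (intro sum.neutral) (auto simp: binomial_eq_0)

definition cc :: "nat \<Rightarrow> nat \<Rightarrow> real" where
  "cc m l = fact l * fact (m - l) / fact (m + l)"

lemma cc_rec:
  assumes "p < m"
  shows "real (Suc p) * cc m p = (real m - real p) * (real m + real p + 1) * cc m (Suc p)"
proof -
  obtain q where m: "m = p + 1 + q" using assms by (metis add.commute less_imp_Suc_add add_Suc_right Suc_eq_plus1)
  have e: "m - p = Suc q" "m - Suc p = q" "m + p = Suc (2*p+q)" "m + Suc p = Suc (Suc (2*p+q))"
    "real m - real p = real q + 1" "real m + real p + 1 = real (Suc (Suc (2*p+q)))" using m by auto
  define N where "N = 2*p+q"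
  define F where "F = (fact (Suc N) :: real)"
  have F: "F > 0" unfolding F_def by simp
  have c1: "cc m p = fact p * ((real q + 1) * fact q) / F"
    unfolding cc_def e F_def N_def by (simp add: fact_Suc)
  have c2: "cc m (Suc p) = ((real p + 1) * fact p) * fact q / ((real N + 2) * F)"
    unfolding cc_def e F_def N_def by (simp add: fact_Suc algebra_simps)
  have e2: "real m + real p + 1 = real N + 2" unfolding N_def using m by simp
  have N2: "real N + 2 > 0" by simp
  have "(real q + 1) * (real N + 2) * ((real p + 1) * fact p * fact q / ((real N + 2) * F))
      = (real q + 1) * ((real p + 1) * fact p * fact q / F)"
    using N2 F by (simp add: divide_simps)
  thus ?thesis unfolding c1 c2 e2 e(5) by (simp add: algebra_simps)
qed

lemma B_eq:
  assumes "l \<le> m"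
  shows "B l m = fact m / 2 ^ m * cc m l * S m l"
proof -
  have sum_eq: "(\<Sum>k = l..m. 2 ^ k * real ((2*m - 2*k) choose (m - k)) * real ((m + k) choose k) * real (k choose l)) = S m l"
    unfolding S_def a_def
    by (rule sum.mono_neutral_left) (auto simp: binomial_eq_0)
  have f1: "fact (m - l) > (0::real)" "fact (m + l) > (0::real)" by simp_all
  have p: "pochhammer (real m + 1 - real l) (2 * l) = fact (m + l) / fact (m - l)"
  proof -
    have e1: "real m + 1 - real l = real (m - l) + 1" using assms by (simp add: of_nat_diff)
    have e2: "m - l + 2 * l = m + l" using assms by simp
    have "pochhammer (real (m - l) + 1) (2 * l) * fact (m - l) = (fact (m - l + 2 * l) :: real)"
      by (rule poch_fact)
    hence "pochhammer (real m + 1 - real l) (2 * l) * fact (m - l) = (fact (m + l) :: real)"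
      unfolding e1 e2 .
    thus ?thesis using f1 by (simp add: eq_divide_eq)
  qed
  have pw: "(2::real) ^ (m - l) * 2 ^ l = 2 ^ m"
  proof -
    have "(2::real) ^ (m - l) * 2 ^ l = 2 ^ (m - l + l)" by (rule power_add[symmetric])
    also have "m - l + l = m" using assms by simp
    finally show ?thesis .
  qed
  show ?thesis
    unfolding B_def A_def sum_eq p cc_def pw[symmetric] using f1
    by (simp add: divide_simps)
qed


lemma S_top: "S m m = 2 ^ m * (fact (2*m) / (fact m * fact m))"
proof -
  have "S m m = (\<Sum>k<Suc m. a m k * real (k choose m))" unfolding S_def lessThan_Suc_atMost ..
  also have "\<dots> = (\<Sum>k<m. a m k * real (k choose m)) + a m m" by simp
  also have "(\<Sum>k<m. a m k * real (k choose m)) = 0" by (intro sum.neutral) (auto simp: binomial_eq_0)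
  finally show ?thesis unfolding a_def by (simp add: binomial_fact mult_2_right mult_2)
qed

lemma B_top: "B m m = 1"
  unfolding B_eq[OF order_refl] S_top cc_def by (simp add: mult_2 mult_2_right field_simps)

lemma B_rec:
  assumes "1 \<le> l" "l \<le> m"
  shows "B (l - 1) m = (2 * real m + 1) * B l m - (real m - real l) * (real m + real l + 1) * B (l + 1) m"
proof -
  obtain p where l: "l = Suc p" using assms by (cases l) auto
  define K where "K = (fact m / 2 ^ m :: real)"
  have pm: "p < m" using assms l by simp
  have Bp: "B (l - 1) m = K * cc m p * S m p" using B_eq[of p m] pm unfolding l K_def by simp
  have Bl: "B l m = K * cc m l * S m l" using B_eq[OF assms(2)] unfolding K_def by simp
  have T: "(real m - real l) * (real m + real l + 1) * B (l + 1) m = K * real (l+1) * cc m l * S m (l+1)"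
  proof (cases "l < m")
    case True
    have "(real m - real l) * (real m + real l + 1) * B (l + 1) m
       = K * ((real m - real l) * (real m + real l + 1) * cc m (Suc l)) * S m (l+1)"
      using B_eq[of "l+1" m] True unfolding K_def by simp
    also have "\<dots> = K * real (l+1) * cc m l * S m (l+1)" using cc_rec[OF True] by simp
    finally show ?thesis .
  next
    case False
    hence "l = m" using assms by simp
    thus ?thesis using S_zero[of m "l+1"] by simp
  qed
  have cr: "real l * cc m p = (real m - real p) * (real m + real p + 1) * cc m l"
    using cc_rec[OF pm] unfolding l .
  have sr: "real (p+1) * real (p+2) * S m (p+2) = (2 * real m + 1) * real (p+1) * S m (p+1)
     + (real p * real p + real p - real m * real m - real m) * S m p" by (rule S_rec)
  have sr0: "(real m - real p) * (real m + real p + 1) * S m p = (2 * real m + 1) * real (p+1) * S m (p+1) - real (p+1) * real (p+2) * S m (p+2)"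
    using sr by (simp add: algebra_simps)
  have e3: "l + 1 = p + 2" "l = p + 1" using l by simp_all
  have sr': "(real m - real p) * (real m + real p + 1) * S m p = (2 * real m + 1) * real l * S m l - real l * real (l+1) * S m (l+1)"
    using sr0 l by (simp add: numeral_2_eq_2)
  have lpos: "real l > 0" using l by simp
  have "real l * B (l - 1) m = K * S m p * (real l * cc m p)"
    unfolding Bp by (simp only: ac_simps)
  also have "\<dots> = K * S m p * ((real m - real p) * (real m + real p + 1) * cc m l)"
    by (simp only: cr)
  also have "\<dots> = K * cc m l * ((real m - real p) * (real m + real p + 1) * S m p)"
    by (simp only: ac_simps)
  also have "\<dots> = K * cc m l * ((2 * real m + 1) * real l * S m l - real l * real (l+1) * S m (l+1))"
    by (simp only: sr')
  also have "\<dots> = real l * ((2 * real m + 1) * B l m - (real m - real l) * (real m + real l + 1) * B (l + 1) m)"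
    unfolding T Bl by (simp add: algebra_simps)
  finally show ?thesis using lpos by simp
qed


lemma B_odd_aux:
  "(i \<le> m \<longrightarrow> (\<exists>k::int. odd k \<and> B (m - i) m = of_int k)) \<and>
   (Suc i \<le> m \<longrightarrow> (\<exists>k::int. odd k \<and> B (m - Suc i) m = of_int k))"
proof (induction i)
  case 0
  show ?case
  proof (intro conjI impI)
    show "\<exists>k::int. odd k \<and> B (m - 0) m = of_int k"
      using B_top by (intro exI[of _ 1]) simp
  next
    assume "Suc 0 \<le> m"
    hence "B (m - Suc 0) m = 2 * real m + 1" using B_rec[of m m] B_top by simp
    thus "\<exists>k::int. odd k \<and> B (m - Suc 0) m = of_int k"
      by (intro exI[of _ "2 * int m + 1"]) simp
  qed
next
  case (Suc i)
  show ?case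
  proof (intro conjI impI)
    assume "Suc i \<le> m" thus "\<exists>k::int. odd k \<and> B (m - Suc i) m = of_int k" using Suc by blast
  next
    assume h: "Suc (Suc i) \<le> m"
    obtain k1 where k1: "odd k1" "B (m - Suc i) m = of_int k1" using Suc h by auto
    obtain k2 where k2: "odd k2" "B (m - i) m = of_int k2" using Suc h by auto
    define L where "L = m - Suc i"
    have L1: "1 \<le> L" "L \<le> m" "L - 1 = m - Suc (Suc i)" "L + 1 = m - i" using h unfolding L_def by auto
    define N where "N = (m - L) * (m + L + 1)"
    have Nr: "(real m - real L) * (real m + real L + 1) = real N"
    proof -
      have "real N = real (m - L) * real (m + L + 1)" unfolding N_def by (rule of_nat_mult)
      also have "real (m - L) = real m - real L" using L1 by (simp add: of_nat_diff)
      finally show ?thesis by simp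
    qed
    have Nev: "even N"
    proof -
      have eq: "m + L + 1 = (m - L) + (2 * L + 1)" using L1 by simp
      have "even ((m - L) * ((m - L) + (2 * L + 1)))" by (cases "even (m - L)") auto
      thus ?thesis unfolding N_def eq .
    qed
    have "B (m - Suc (Suc i)) m = of_int ((2 * int m + 1) * k1 - int N * k2)"
      using B_rec[OF L1(1,2)] unfolding L1(3,4) Nr using k1 k2 unfolding L_def by simp
    moreover have "odd ((2 * int m + 1) * k1 - int N * k2)" using k1 Nev by simp
    ultimately show "\<exists>k::int. odd k \<and> B (m - Suc (Suc i)) m = of_int k" by blast
  qed
qed

theorem mainTheorem10:
  shows "(\<forall>m. B m m = 1)
    \<and> (\<forall>m. m \<ge> 1 \<longrightarrow> B (m - 1) m = 2 * real m + 1)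
    \<and> (\<forall>m l. 1 \<le> l \<and> l + 1 \<le> m \<longrightarrow>
          B (l - 1) m = (2 * real m + 1) * B l m
                        - (real m - real l) * (real m + real l + 1) * B (l + 1) m)
    \<and> (\<forall>m l. l \<le> m \<longrightarrow> (\<exists>k::int. odd k \<and> B l m = of_int k))"
proof (intro conjI allI impI)
  fix m show "B m m = 1" by (rule B_top)
next
  fix m :: nat assume "1 \<le> m"
  thus "B (m - 1) m = 2 * real m + 1" using B_rec[of m m] B_top by simp
next
  fix m l :: nat assume "1 \<le> l \<and> l + 1 \<le> m"
  thus "B (l - 1) m = (2 * real m + 1) * B l m - (real m - real l) * (real m + real l + 1) * B (l + 1) m"
    using B_rec[of l m] by simp
next
  fix m l :: nat assume h: "l \<le> m"
  have "m - (m - l) = l" using h by simp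
  thus "\<exists>k::int. odd k \<and> B l m = of_int k" using B_odd_aux[of "m - l" m] by auto
qed

end
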